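(* Let $\gamma\in(0,1]$, $\varsigma(t):=\gamma t^{\gamma-1}$, and $\bm\sigma:=\big(\varsigma(\tfrac1N),\dots,\varsigma(\tfrac{N-1}N)\big)/\varsigma(\tfrac1N)\in\mathbb R^{N-1}$. Let $\mathcal S:=\{\bm\Pi\in\mathbb R^{(N-1)\times(N-1)}:0\le\Pi_{ij}\le1\ \forall i,j,\ \bm\Pi\bm e=\bm e,\ \bm\Pi^\top\bm e=\bm e\}$ and let $\bm\Pi_i$ denote the $i$-th row of $\bm\Pi$. Consider: (P$_\sigma$) $\displaystyle\min_{\bm w\in\widehat{\mathcal V},\,\bm\Pi\in\mathcal S}\bm w^\top\bar{\bm g}$ s.t. $w_i-(\bm c_{[N-1]})_i\in[-(\bm\Pi_i\bm\sigma)\underline v_i,\,(\bm\Pi_i\bm\sigma)\bar v_i]$, $i\in[N-1]$; (L$_\sigma$) $\displaystyle\max\ \Big[\bm c_{[N-1]}^\top\bar{\bm g}-\bm\eta^\top\bm c_{[N-1]}+\sum_{m=1}^M\theta_mh_m\bm c_{[N-1]}^\top\bm\Delta^m+\min_{\bm\Pi\in\mathcal S}\sum_{i=1}^{N-1}(\bm\Pi_i\bm\sigma)\big(-(\underline\lambda_i\underline v_i+\bar\lambda_i\bar v_i)\big)\Big]$ over $(\underline{\bm\lambda},\bar{\bm\lambda},\beta,\bm\eta,\bm\theta)\in\mathbb R^{N-1}\times\mathbb R^{N-1}\times\mathbb R\times\mathbb R^{N-1}\times\mathbb R^M$ with $\bar{\bm g}-\underline{\bm\lambda}+\bar{\bm\lambda}+\beta\bm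 e-\bm\eta+\sum_{m=1}^M\theta_mh_m\bm\Delta^m=\bm 0$ and $\underline{\bm\lambda},\bar{\bm\lambda},\bm\eta,\bm\theta\ge0$; (D$_\sigma$) $\displaystyle\max\ \bm c_{[N-1]}^\top\bar{\bm g}+\sum_{m=1}^M\theta_mh_m\bm c_{[N-1]}^\top\bm\Delta^m-\bm\eta^\top\bm c_{[N-1]}-\sum_{i,j}\Theta_{ij}-\underline{\bm\tau}^\top\bm e-\bar{\bm\tau}^\top\bm e$ over $\underline{\bm\lambda},\bar{\bm\lambda},\bm\eta,\underline{\bm\tau},\bar{\bm\tau}\in\mathbb R^{N-1}$, $\beta\in\mathbb R$, $\bm\theta\in\mathbb R^M$, $\bm\Theta\in\mathbb R^{(N-1)\times(N-1)}$ subject to $\bar{\bm g}-\underline{\bm\lambda}+\bar{\bm\lambda}+\beta\bm e-\bm\eta+\sum_{m=1}^M\theta_mh_m\bm\Delta^m=\bm 0$, $(-\underline{\bm\lambda}\circ\underline{\bm v}-\bar{\bm\lambda}\circ\bar{\bm v})\bm\sigma^\top+\underline{\bm\tau}\bm e^\top+\bm e\bar{\bm\tau}^\top+\bm\Theta\ge0$ (entrywise, $\circ$ the Hadamard product), $\underline{\bm\lambda},\bar{\bm\lambda},\bm\eta,\bm\theta,\bm\Theta\ge0$. Then (P$_\sigma$) and (L$_\sigma$) can both be reformulated as (D$_\sigma$): their optimal values coincide with the optimal value of (D$_\sigma$).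
   Context: Let $N\ge3$ be an integer and $\underline x=x_1<x_2<\cdots<x_N=\bar x$ real numbers; $\bm e$ denotes the all-ones vector of the appropriate dimension. Define $\bm g:[\underline x,\bar x]\to\mathbb R^{N-1}$ by $\bm g(x_1)=\bm 0$ and, for $x\in(x_i,x_{i+1}]$ ($i\in\{1,\dots,N-1\}$), $\bm g(x)=(1,\dots,1,\frac{x-x_i}{x_{i+1}-x_i},0,\dots,0)$ with the first $i-1$ entries equal to $1$, the $i$-th entry $\frac{x-x_i}{x_{i+1}-x_i}$ and the last $N-1-i$ entries $0$. For $\bm v\in\mathbb R^{N-2}$ let $\bm R\bm v:=(v_1,\dots,v_{N-2},1-\bm e^\top\bm v)\in\mathbb R^{N-1}$. Let $\bm z\in\mathbb R^n$ and $\bm\xi^1,\dots,\bm\xi^K\in\mathbb R^n$ with $\bm z^\top\bm\xi^k\in[\underline x,\bar x]$ (the distribution of $\bm\xi$ puts mass $1/K$ on each $\bm\xi^k$), and $\bar{\bm g}:=\frac1K\sum_{k=1}^K\bm g(\bm z^\top\bm\xi^k)$. Let $M\ge1$ and, for $m=1,\dots,M$, let $r_1^m\le r_3^m$ and $r_2^m$ lie in $[\underline x,\bar x]$, $p^m\in[0,1]$, $h_m\in\{-1,1\}$, and $\bm\Delta^m:=(1-p^m)\bm g(r_1^m)+p^m\bm g(r_3^m)-\bm g(r_2^m)$. Let $\mathcal V:=\{\bm v\in\mathbb R^{N-2}:\bm v\ge0,\ \bm e^\top\bm v\le1,\ h_m(\bm R\bm v)^\top\bm\Delta^m\le0,\ m\in[M]\}$,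 assumed to have nonempty interior, let $\bm c\in\mathbb R^{N-2}$ be its analytic center (maximizer over the interior of the sum of the logarithms of the slacks of the defining inequalities) and $\bm c_{[N-1]}:=\bm R\bm c$ (so $\bm e^\top\bm c_{[N-1]}=1$). For $i\in[N-1]$ let $\underline v_i:=-\min\{(\bm R\bm v)_i-(\bm c_{[N-1]})_i:\bm v\in\mathcal V\}$ and $\bar v_i:=\max\{(\bm R\bm v)_i-(\bm c_{[N-1]})_i:\bm v\in\mathcal V\}$; $\underline{\bm v}=(\underline v_i)$, $\bar{\bm v}=(\bar v_i)$. Let $\widehat{\mathcal V}:=\{\bm w\in\mathbb R^{N-1}_+:\bm e^\top\bm w=1,\ h_m\bm w^\top\bm\Delta^m\le0,\ m\in[M]\}$. Optimal values are understood in the extended reals. *)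

theory Defs
  imports "HOL-Analysis.Analysis"
begin

text \<open>Conventions: vectors of R^d are functions nat => real, indexed by 1..d;
  values at other indices are irrelevant. Matrices are nat => nat => real.\<close>

definition dotv :: "nat \<Rightarrow> (nat \<Rightarrow> real) \<Rightarrow> (nat \<Rightarrow> real) \<Rightarrow> real" where
  "dotv d a b = (\<Sum>i=1..d. a i * b i)"

definition gfun :: "nat \<Rightarrow> (nat \<Rightarrow> real) \<Rightarrow> real \<Rightarrow> nat \<Rightarrow> real" where
  "gfun N x t j =
     (if t = x 1 then 0
      else (let i = (THE i. i \<in> {1..N-1} \<and> x i < t \<and> t \<le> x (Suc i)) in
            if j < i then 1
            else if j = i then (t - x i) / (x (Suc i) - x i)
            else 0))"

definition Rmap :: "nat \<Rightarrow> (nat \<Rightarrow> real) \<Rightarrow> nat \<Rightarrow> real" where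
  "Rmap N v j = (if j = N - 1 then 1 - (\<Sum>i=1..N-2. v i) else v j)"

definition gbar :: "nat \<Rightarrow> (nat \<Rightarrow> real) \<Rightarrow> nat \<Rightarrow> real^'n \<Rightarrow> (nat \<Rightarrow> real^'n) \<Rightarrow> nat \<Rightarrow> real" where
  "gbar N x K z xi j = (1 / real K) * (\<Sum>k=1..K. gfun N x (z \<bullet> xi k) j)"

definition DeltaF :: "nat \<Rightarrow> (nat \<Rightarrow> real) \<Rightarrow> (nat \<Rightarrow> real) \<Rightarrow> (nat \<Rightarrow> real) \<Rightarrow> (nat \<Rightarrow> real)
    \<Rightarrow> (nat \<Rightarrow> real) \<Rightarrow> nat \<Rightarrow> nat \<Rightarrow> real" where
  "DeltaF N x p r1 r2 r3 m j =
     (1 - p m) * gfun N x (r1 m) j + p m * gfun N x (r3 m) j - gfun N x (r2 m) j"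

definition Vset :: "nat \<Rightarrow> nat \<Rightarrow> (nat \<Rightarrow> real) \<Rightarrow> (nat \<Rightarrow> nat \<Rightarrow> real) \<Rightarrow> (nat \<Rightarrow> real) set" where
  "Vset N M h \<Delta> = {v. (\<forall>i\<in>{1..N-2}. 0 \<le> v i) \<and> (\<Sum>i=1..N-2. v i) \<le> 1 \<and>
       (\<forall>m\<in>{1..M}. h m * dotv (N-1) (Rmap N v) (\<Delta> m) \<le> 0)}"

definition in_int_V :: "nat \<Rightarrow> nat \<Rightarrow> (nat \<Rightarrow> real) \<Rightarrow> (nat \<Rightarrow> nat \<Rightarrow> real) \<Rightarrow> (nat \<Rightarrow> real) \<Rightarrow> bool" where
  "in_int_V N M h \<Delta> v \<longleftrightarrow> (\<exists>\<epsilon>>0. \<forall>u. (\<forall>i\<in>{1..N-2}. \<bar>u i - v i\<bar> < \<epsilon>) \<longrightarrow> u \<in> Vset N M h \<Delta>)"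

definition pos_slacks :: "nat \<Rightarrow> nat \<Rightarrow> (nat \<Rightarrow> real) \<Rightarrow> (nat \<Rightarrow> nat \<Rightarrow> real) \<Rightarrow> (nat \<Rightarrow> real) \<Rightarrow> bool" where
  "pos_slacks N M h \<Delta> v \<longleftrightarrow> (\<forall>i\<in>{1..N-2}. 0 < v i) \<and> 0 < 1 - (\<Sum>i=1..N-2. v i) \<and>
       (\<forall>m\<in>{1..M}. 0 < - (h m * dotv (N-1) (Rmap N v) (\<Delta> m)))"

definition log_barrier :: "nat \<Rightarrow> nat \<Rightarrow> (nat \<Rightarrow> real) \<Rightarrow> (nat \<Rightarrow> nat \<Rightarrow> real) \<Rightarrow> (nat \<Rightarrow> real) \<Rightarrow> real" where
  "log_barrier N M h \<Delta> v = (\<Sum>i=1..N-2. ln (v i)) + ln (1 - (\<Sum>i=1..N-2. v i)) +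
       (\<Sum>m=1..M. ln (- (h m * dotv (N-1) (Rmap N v) (\<Delta> m))))"

definition analytic_center :: "nat \<Rightarrow> nat \<Rightarrow> (nat \<Rightarrow> real) \<Rightarrow> (nat \<Rightarrow> nat \<Rightarrow> real) \<Rightarrow> (nat \<Rightarrow> real) \<Rightarrow> bool" where
  "analytic_center N M h \<Delta> c \<longleftrightarrow> in_int_V N M h \<Delta> c \<and> pos_slacks N M h \<Delta> c \<and>
     (\<forall>v. in_int_V N M h \<Delta> v \<and> pos_slacks N M h \<Delta> v \<longrightarrow> log_barrier N M h \<Delta> v \<le> log_barrier N M h \<Delta> c)"

definition vlow :: "nat \<Rightarrow> nat \<Rightarrow> (nat \<Rightarrow> real) \<Rightarrow> (nat \<Rightarrow> nat \<Rightarrow> real) \<Rightarrow> (nat \<Rightarrow> real) \<Rightarrow> nat \<Rightarrow> real" where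
  "vlow N M h \<Delta> c i = - Inf {Rmap N v i - Rmap N c i | v. v \<in> Vset N M h \<Delta>}"

definition vup :: "nat \<Rightarrow> nat \<Rightarrow> (nat \<Rightarrow> real) \<Rightarrow> (nat \<Rightarrow> nat \<Rightarrow> real) \<Rightarrow> (nat \<Rightarrow> real) \<Rightarrow> nat \<Rightarrow> real" where
  "vup N M h \<Delta> c i = Sup {Rmap N v i - Rmap N c i | v. v \<in> Vset N M h \<Delta>}"

definition Vhat :: "nat \<Rightarrow> nat \<Rightarrow> (nat \<Rightarrow> real) \<Rightarrow> (nat \<Rightarrow> nat \<Rightarrow> real) \<Rightarrow> (nat \<Rightarrow> real) set" where
  "Vhat N M h \<Delta> = {w. (\<forall>i\<in>{1..N-1}. 0 \<le> w i) \<and> (\<Sum>i=1..N-1. w i) = 1 \<and>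
       (\<forall>m\<in>{1..M}. h m * dotv (N-1) w (\<Delta> m) \<le> 0)}"

definition varsigma :: "real \<Rightarrow> real \<Rightarrow> real" where
  "varsigma \<gamma> t = \<gamma> * t powr (\<gamma> - 1)"

definition sigmav :: "real \<Rightarrow> nat \<Rightarrow> nat \<Rightarrow> real" where
  "sigmav \<gamma> N i = varsigma \<gamma> (real i / real N) / varsigma \<gamma> (1 / real N)"

definition Smat :: "nat \<Rightarrow> (nat \<Rightarrow> nat \<Rightarrow> real) set" where
  "Smat N = {Pm. (\<forall>i\<in>{1..N-1}. \<forall>j\<in>{1..N-1}. 0 \<le> Pm i j \<and> Pm i j \<le> 1) \<and>
       (\<forall>i\<in>{1..N-1}. (\<Sum>j=1..N-1. Pm i j) = 1) \<and>
       (\<forall>j\<in>{1..N-1}. (\<Sum>i=1..N-1. Pm i j) = 1)}"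

definition rowsig :: "nat \<Rightarrow> (nat \<Rightarrow> nat \<Rightarrow> real) \<Rightarrow> (nat \<Rightarrow> real) \<Rightarrow> nat \<Rightarrow> real" where
  "rowsig N Pm \<sigma> i = (\<Sum>j=1..N-1. Pm i j * \<sigma> j)"

text \<open>Optimal value of (P_sigma) (infimum in the extended reals; +\<infinity> if infeasible).\<close>
definition valP :: "nat \<Rightarrow> nat \<Rightarrow> (nat \<Rightarrow> real) \<Rightarrow> (nat \<Rightarrow> nat \<Rightarrow> real) \<Rightarrow> (nat \<Rightarrow> real)
    \<Rightarrow> (nat \<Rightarrow> real) \<Rightarrow> (nat \<Rightarrow> real) \<Rightarrow> (nat \<Rightarrow> real) \<Rightarrow> (nat \<Rightarrow> real) \<Rightarrow> ereal" where
  "valP N M h \<Delta> gb cN vl vu \<sigma> =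
     Inf {ereal (dotv (N-1) w gb) | w Pm. w \<in> Vhat N M h \<Delta> \<and> Pm \<in> Smat N \<and>
        (\<forall>i\<in>{1..N-1}. - (rowsig N Pm \<sigma> i) * vl i \<le> w i - cN i \<and> w i - cN i \<le> rowsig N Pm \<sigma> i * vu i)}"

text \<open>Optimal value of (L_sigma) (supremum in the extended reals; -\<infinity> if infeasible).\<close>
definition valL :: "nat \<Rightarrow> nat \<Rightarrow> (nat \<Rightarrow> real) \<Rightarrow> (nat \<Rightarrow> nat \<Rightarrow> real) \<Rightarrow> (nat \<Rightarrow> real)
    \<Rightarrow> (nat \<Rightarrow> real) \<Rightarrow> (nat \<Rightarrow> real) \<Rightarrow> (nat \<Rightarrow> real) \<Rightarrow> (nat \<Rightarrow> real) \<Rightarrow> ereal" where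
  "valL N M h \<Delta> gb cN vl vu \<sigma> =
     Sup {ereal (dotv (N-1) cN gb - dotv (N-1) \<eta> cN + (\<Sum>m=1..M. \<theta> m * h m * dotv (N-1) cN (\<Delta> m)))
            + (INF Pm\<in>Smat N. ereal (\<Sum>i=1..N-1. rowsig N Pm \<sigma> i * (- (ll i * vl i + lu i * vu i))))
          | ll lu (\<beta>::real) \<eta> \<theta>.
          (\<forall>i\<in>{1..N-1}. gb i - ll i + lu i + \<beta> - \<eta> i + (\<Sum>m=1..M. \<theta> m * h m * \<Delta> m i) = 0) \<and>
          (\<forall>i\<in>{1..N-1}. 0 \<le> ll i \<and> 0 \<le> lu i \<and> 0 \<le> \<eta> i) \<and> (\<forall>m\<in>{1..M}. 0 \<le> \<theta> m)}"

text \<open>Optimal value of (D_sigma) (supremum in the extended reals; -\<infinity> if infeasible).\<close>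
definition valD :: "nat \<Rightarrow> nat \<Rightarrow> (nat \<Rightarrow> real) \<Rightarrow> (nat \<Rightarrow> nat \<Rightarrow> real) \<Rightarrow> (nat \<Rightarrow> real)
    \<Rightarrow> (nat \<Rightarrow> real) \<Rightarrow> (nat \<Rightarrow> real) \<Rightarrow> (nat \<Rightarrow> real) \<Rightarrow> (nat \<Rightarrow> real) \<Rightarrow> ereal" where
  "valD N M h \<Delta> gb cN vl vu \<sigma> =
     Sup {ereal (dotv (N-1) cN gb + (\<Sum>m=1..M. \<theta> m * h m * dotv (N-1) cN (\<Delta> m)) - dotv (N-1) \<eta> cN
               - (\<Sum>i=1..N-1. \<Sum>j=1..N-1. Th i j) - (\<Sum>i=1..N-1. tl i) - (\<Sum>i=1..N-1. tu i))
          | ll lu \<eta> tl tu (\<beta>::real) \<theta> Th.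
          (\<forall>i\<in>{1..N-1}. gb i - ll i + lu i + \<beta> - \<eta> i + (\<Sum>m=1..M. \<theta> m * h m * \<Delta> m i) = 0) \<and>
          (\<forall>i\<in>{1..N-1}. \<forall>j\<in>{1..N-1}.
             0 \<le> (- ll i * vl i - lu i * vu i) * \<sigma> j + tl i + tu j + Th i j) \<and>
          (\<forall>i\<in>{1..N-1}. 0 \<le> ll i \<and> 0 \<le> lu i \<and> 0 \<le> \<eta> i) \<and> (\<forall>m\<in>{1..M}. 0 \<le> \<theta> m) \<and>
          (\<forall>i\<in>{1..N-1}. \<forall>j\<in>{1..N-1}. 0 \<le> Th i j)}"

end

theory Submission
  imports Defs
begin

inductive_set cg :: "(('j \<Rightarrow> real) \<times> real) set \<Rightarrow> (('j \<Rightarrow> real) \<times> real) set" for S where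
  cg0: "((\<lambda>_. 0), 0) \<in> cg S"
| cgS: "s \<in> S \<Longrightarrow> 0 \<le> c \<Longrightarrow> u \<in> cg S \<Longrightarrow> ((\<lambda>j. c * fst s j + fst u j), c * snd s + snd u) \<in> cg S"

lemma cg_add: "u \<in> cg S \<Longrightarrow> u' \<in> cg S \<Longrightarrow> ((\<lambda>j. fst u j + fst u' j), snd u + snd u') \<in> cg S"
proof (induction u rule: cg.induct)
  case cg0
  then show ?case by simp
next
  case (cgS s c u)
  from cg.cgS[OF cgS(1,2) cgS(4)[OF cgS(5)]] show ?case by (simp add: algebra_simps)
qed

lemma cg_scale: "u \<in> cg S \<Longrightarrow> 0 \<le> c \<Longrightarrow> ((\<lambda>j. c * fst u j), c * snd u) \<in> cg S"
proof (induction u rule: cg.induct)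
  case cg0
  then show ?case using cg.cg0 by simp
next
  case (cgS s d u)
  from cg.cgS[OF cgS(1) mult_nonneg_nonneg[OF cgS(5) cgS(2)] cgS(4)[OF cgS(5)]]
  show ?case by (simp add: algebra_simps)
qed

lemma cg_mono: "u \<in> cg S' \<Longrightarrow> S' \<subseteq> cg S \<Longrightarrow> u \<in> cg S"
proof (induction u rule: cg.induct)
  case cg0
  show ?case by (rule cg.cg0)
next
  case (cgS s c u)
  have "s \<in> cg S" using cgS by auto
  from cg_add[OF cg_scale[OF this cgS(2)] cgS(4)[OF cgS(5)]] show ?case by simp
qed

lemma cg_zero_coord: "u \<in> cg S \<Longrightarrow> \<forall>s\<in>S. fst s k = 0 \<Longrightarrow> fst u k = 0"
  by (induction u rule: cg.induct) auto

lemma cg_self: "s \<in> S \<Longrightarrow> s \<in> cg S"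
  using cg.cgS[OF _ _ cg.cg0, where s=s and c=1 and S=S] by simp

lemma sep_point:
  fixes A B :: "real set"
  assumes "finite A" "finite B" "\<forall>a\<in>A. \<forall>b\<in>B. a \<le> b"
  shows "\<exists>t. (\<forall>a\<in>A. a \<le> t) \<and> (\<forall>b\<in>B. t \<le> b)"
proof (cases "B = {}")
  case True
  show ?thesis
  proof (cases "A = {}")
    case True
    then show ?thesis using \<open>B = {}\<close> by auto
  next
    case False
    then show ?thesis using True assms by (intro exI[of _ "Max A"]) auto
  qed
next
  case False
  then show ?thesis using assms by (intro exI[of _ "Min B"]) auto
qed

lemma fm:
  fixes S :: "(('j \<Rightarrow> real) \<times> real) set"
  assumes "finite J" "finite S" "\<not> (\<exists>x. \<forall>s\<in>S. (\<Sum>j\<in>J. fst s j * x j) \<le> snd s)"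
  shows "\<exists>u\<in>cg S. (\<forall>j\<in>J. fst u j = 0) \<and> snd u < 0"
  using assms
proof (induction J arbitrary: S rule: finite_induct)
  case empty
  then obtain s where s: "s \<in> S" "snd s < 0" by force
  then show ?case using cg_self[OF s(1)] by auto
next
  case (insert k J)
  define Z where "Z = {s\<in>S. fst s k = 0}"
  define P where "P = {s\<in>S. fst s k > 0}"
  define Ng where "Ng = {s\<in>S. fst s k < 0}"
  define comb where "comb = (\<lambda>(p::('j \<Rightarrow> real) \<times> real, n::('j \<Rightarrow> real) \<times> real).
     ((\<lambda>j. (- fst n k) * fst p j + fst p k * fst n j), (- fst n k) * snd p + fst p k * snd n))"
  define S' where "S' = Z \<union> comb ` (P \<times> Ng)"
  have finS': "finite S'" using insert.prems(1) unfolding S'_def Z_def P_def Ng_def by auto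
  have infeas: "\<not> (\<exists>x. \<forall>s\<in>S'. (\<Sum>j\<in>J. fst s j * x j) \<le> snd s)"
  proof
    assume "\<exists>x. \<forall>s\<in>S'. (\<Sum>j\<in>J. fst s j * x j) \<le> snd s"
    then obtain x where x: "\<forall>s\<in>S'. (\<Sum>j\<in>J. fst s j * x j) \<le> snd s" by blast
    define r where "r = (\<lambda>s. snd s - (\<Sum>j\<in>J. fst s j * x j))"
    have rZ: "0 \<le> r s" if "s \<in> Z" for s using x that unfolding r_def S'_def by auto
    have rPN: "r n / fst n k \<le> r p / fst p k" if "p \<in> P" "n \<in> Ng" for p n
    proof -
      have "comb (p, n) \<in> S'" using that unfolding S'_def by auto
      then have "(\<Sum>j\<in>J. ((- fst n k) * fst p j + fst p k * fst n j) * x j) \<le> (- fst n k) * snd p + fst p k * snd n"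
        using x unfolding comb_def by auto
      also have "(\<Sum>j\<in>J. ((- fst n k) * fst p j + fst p k * fst n j) * x j) =
         (- fst n k) * (\<Sum>j\<in>J. fst p j * x j) + fst p k * (\<Sum>j\<in>J. fst n j * x j)"
      proof -
        have "(\<Sum>j\<in>J. ((- fst n k) * fst p j + fst p k * fst n j) * x j) =
          (\<Sum>j\<in>J. (- fst n k) * (fst p j * x j) + fst p k * (fst n j * x j))"
          by (rule sum.cong) (auto simp: algebra_simps)
        also have "\<dots> = (- fst n k) * (\<Sum>j\<in>J. fst p j * x j) + fst p k * (\<Sum>j\<in>J. fst n j * x j)"
          by (simp only: sum.distrib sum_distrib_left)
        finally show ?thesis .
      qed
      finally have "0 \<le> (- fst n k) * r p + fst p k * r n" unfolding r_def by (simp add: algebra_simps)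
      moreover have "fst p k > 0" "fst n k < 0" using that unfolding P_def Ng_def by auto
      ultimately show ?thesis by (simp add: field_simps)
    qed
    obtain t where t: "\<forall>a\<in>(\<lambda>n. r n / fst n k) ` Ng. a \<le> t" "\<forall>b\<in>(\<lambda>p. r p / fst p k) ` P. t \<le> b"
      using sep_point[of "(\<lambda>n. r n / fst n k) ` Ng" "(\<lambda>p. r p / fst p k) ` P"] rPN
        insert.prems(1) unfolding P_def Ng_def by auto
    have "\<forall>s\<in>S. (\<Sum>j\<in>insert k J. fst s j * (x(k := t)) j) \<le> snd s"
    proof
      fix s assume sS: "s \<in> S"
      have eq: "(\<Sum>j\<in>insert k J. fst s j * (x(k := t)) j) = fst s k * t + (\<Sum>j\<in>J. fst s j * x j)"
        using insert.hyps by (simp add: sum.insert) (intro sum.cong, auto)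
      have "fst s k * t \<le> r s"
      proof (cases "fst s k = 0")
        case True
        then show ?thesis using rZ sS unfolding Z_def by auto
      next
        case False
        show ?thesis
        proof (cases "fst s k > 0")
          case True
          then have "s \<in> P" using sS unfolding P_def by auto
          then have "t \<le> r s / fst s k" using t(2) by blast
          then show ?thesis using True by (simp add: pos_le_divide_eq mult.commute)
        next
          case F2: False
          then have neg: "fst s k < 0" using False by auto
          then have "s \<in> Ng" using sS unfolding Ng_def by auto
          then have "r s / fst s k \<le> t" using t(1) by blast
          then show ?thesis using neg by (simp add: neg_divide_le_eq mult.commute)
        qed
      qed
      then show "(\<Sum>j\<in>insert k J. fst s j * (x(k := t)) j) \<le> snd s" unfolding eq r_def by simp
    qed
    then show False using insert.prems(2) by blast
  qed
  obtain u where u: "u \<in> cg S'" "\<forall>j\<in>J. fst u j = 0" "snd u < 0"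
    using insert.IH[OF finS' infeas] by blast
  have sub: "S' \<subseteq> cg S"
  proof
    fix s assume "s \<in> S'"
    then consider "s \<in> Z" | p n where "p \<in> P" "n \<in> Ng" "s = comb (p, n)" unfolding S'_def by auto
    then show "s \<in> cg S"
    proof cases
      case 1
      then have "s \<in> S" unfolding Z_def by auto
      then show ?thesis by (rule cg_self)
    next
      case 2
      have "p \<in> S" "n \<in> S" "0 \<le> - fst n k" "0 \<le> fst p k" using 2 unfolding P_def Ng_def by auto
      from cg.cgS[OF this(1) this(3) cg.cgS[OF this(2) this(4) cg.cg0]]
      show ?thesis using 2 unfolding comb_def by simp
    qed
  qed
  have k0: "\<forall>s\<in>S'. fst s k = 0" unfolding S'_def Z_def comb_def by auto
  show ?case using u cg_mono[OF u(1) sub] cg_zero_coord[OF u(1) k0] by auto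
qed

lemma cg_mult:
  assumes "finite L" "u \<in> cg ((\<lambda>l. (A l, b l)) ` L)"
  shows "\<exists>y. (\<forall>l\<in>L. 0 \<le> y l) \<and> (\<forall>j. fst u j = (\<Sum>l\<in>L. y l * A l j)) \<and> snd u = (\<Sum>l\<in>L. y l * b l)"
  using assms(2)
proof (induction u rule: cg.induct)
  case cg0
  then show ?case by (intro exI[of _ "\<lambda>_. 0"]) auto
next
  case (cgS s c u)
  obtain y where y: "\<forall>l\<in>L. 0 \<le> y l" "\<forall>j. fst u j = (\<Sum>l\<in>L. y l * A l j)" "snd u = (\<Sum>l\<in>L. y l * b l)"
    using cgS by blast
  obtain l0 where l0: "l0 \<in> L" "s = (A l0, b l0)" using cgS(1) by auto
  define y' where "y' = (\<lambda>l. y l + (if l = l0 then c else 0))"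
  have key: "(\<Sum>l\<in>L. y' l * f l) = c * f l0 + (\<Sum>l\<in>L. y l * f l)" for f :: "_ \<Rightarrow> real"
  proof -
    have "(\<Sum>l\<in>L. y' l * f l) = (\<Sum>l\<in>L. (y l * f l + (if l = l0 then c * f l0 else 0)))"
      by (rule sum.cong) (auto simp: y'_def algebra_simps)
    also have "\<dots> = c * f l0 + (\<Sum>l\<in>L. y l * f l)" using l0(1) assms(1) by (simp add: sum.distrib)
    finally show ?thesis .
  qed
  show ?case
    apply (intro exI[of _ y'] conjI)
    using y cgS(2) l0 key apply (auto simp: y'_def)
    done
qed

lemma farkas:
  fixes A :: "'l \<Rightarrow> 'j \<Rightarrow> real" and b :: "'l \<Rightarrow> real"
  assumes "finite L" "finite J" "\<not> (\<exists>x. \<forall>l\<in>L. (\<Sum>j\<in>J. A l j * x j) \<le> b l)"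
  shows "\<exists>y. (\<forall>l\<in>L. 0 \<le> y l) \<and> (\<forall>j\<in>J. (\<Sum>l\<in>L. y l * A l j) = 0) \<and> (\<Sum>l\<in>L. y l * b l) < 0"
proof -
  have "\<not> (\<exists>x. \<forall>s\<in>(\<lambda>l. (A l, b l)) ` L. (\<Sum>j\<in>J. fst s j * x j) \<le> snd s)" using assms(3) by auto
  from fm[OF assms(2) _ this] assms(1) obtain u where
    u: "u \<in> cg ((\<lambda>l. (A l, b l)) ` L)" "\<forall>j\<in>J. fst u j = 0" "snd u < 0" by auto
  from cg_mult[OF assms(1) u(1)] u(2,3) show ?thesis by metis
qed

lemma weak:
  fixes A :: "'l \<Rightarrow> 'j \<Rightarrow> real" and b :: "'l \<Rightarrow> real"
  assumes "finite L" "finite J" "\<forall>l\<in>L. 0 \<le> y l" "\<forall>j\<in>J. (\<Sum>l\<in>L. y l * A l j) = 0"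
    "\<forall>l\<in>L. y l \<noteq> 0 \<longrightarrow> (\<Sum>j\<in>J. A l j * x j) \<le> b l"
  shows "0 \<le> (\<Sum>l\<in>L. y l * b l)"
proof -
  have "(\<Sum>l\<in>L. y l * (\<Sum>j\<in>J. A l j * x j)) \<le> (\<Sum>l\<in>L. y l * b l)"
    apply (rule sum_mono)
    using assms(3,5) by (metis mult_eq_0_iff mult_left_mono order_refl)
  moreover have "(\<Sum>l\<in>L. y l * (\<Sum>j\<in>J. A l j * x j)) = (\<Sum>j\<in>J. (\<Sum>l\<in>L. y l * A l j) * x j)"
    by (simp add: sum_distrib_left sum_distrib_right sum.swap[of _ J L] algebra_simps)
  moreover have "\<dots> = 0" using assms(4) by simp
  ultimately show ?thesis by simp
qed


datatype lab = LEta nat | LLo nat | LUp nat | LR1 nat | LR2 nat | LC1 nat | LC2 nat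
  | LMu nat nat | LTh nat nat | LTm nat | LB1 | LB2 | LOb

definition Lset :: "nat \<Rightarrow> nat \<Rightarrow> lab set" where
  "Lset n M = LEta ` {1..n} \<union> LLo ` {1..n} \<union> LUp ` {1..n} \<union> LR1 ` {1..n} \<union> LR2 ` {1..n}
     \<union> LC1 ` {1..n} \<union> LC2 ` {1..n} \<union> case_prod LMu ` ({1..n} \<times> {1..n})
     \<union> case_prod LTh ` ({1..n} \<times> {1..n}) \<union> LTm ` {1..M} \<union> {LB1, LB2, LOb}"

lemma finite_Lset: "finite (Lset n M)" unfolding Lset_def by auto

lemma sum_pairs_LMu: "(\<Sum>l\<in>case_prod LMu ` (A \<times> B). f l) = (\<Sum>i\<in>A. \<Sum>j\<in>B. f (LMu i j))"
  if "finite A" "finite B" for A B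
proof -
  have inj: "inj_on (case_prod LMu) (A \<times> B)" by (auto simp: inj_on_def)
  have "(\<Sum>l\<in>case_prod LMu ` (A \<times> B). f l) = (\<Sum>p\<in>A \<times> B. f (case_prod LMu p))"
    by (simp add: sum.reindex[OF inj])
  also have "\<dots> = (\<Sum>i\<in>A. \<Sum>j\<in>B. f (LMu i j))" by (simp add: sum.cartesian_product')
  finally show ?thesis .
qed

lemma sum_pairs_LTh: "(\<Sum>l\<in>case_prod LTh ` (A \<times> B). f l) = (\<Sum>i\<in>A. \<Sum>j\<in>B. f (LTh i j))"
  if "finite A" "finite B" for A B
proof -
  have inj: "inj_on (case_prod LTh) (A \<times> B)" by (auto simp: inj_on_def)
  have "(\<Sum>l\<in>case_prod LTh ` (A \<times> B). f l) = (\<Sum>p\<in>A \<times> B. f (case_prod LTh p))"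
    by (simp add: sum.reindex[OF inj])
  also have "\<dots> = (\<Sum>i\<in>A. \<Sum>j\<in>B. f (LTh i j))" by (simp add: sum.cartesian_product')
  finally show ?thesis .
qed

lemma sumL: "(\<Sum>l\<in>Lset n M. f l) =
   (\<Sum>i=1..n. f (LEta i)) + (\<Sum>i=1..n. f (LLo i)) + (\<Sum>i=1..n. f (LUp i)) + (\<Sum>i=1..n. f (LR1 i))
   + (\<Sum>i=1..n. f (LR2 i)) + (\<Sum>i=1..n. f (LC1 i)) + (\<Sum>i=1..n. f (LC2 i))
   + (\<Sum>i=1..n. \<Sum>j=1..n. f (LMu i j)) + (\<Sum>i=1..n. \<Sum>j=1..n. f (LTh i j)) + (\<Sum>m=1..M. f (LTm m))
   + f LB1 + f LB2 + f LOb"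
  unfolding Lset_def
  apply (subst sum.union_disjoint, force, force, force)+
  apply (simp add: sum.reindex inj_on_def sum.cartesian_product' add.assoc)
  done

definition Jset :: "nat \<Rightarrow> (nat + nat \<times> nat) set" where
  "Jset n = Inl ` {1..n} \<union> Inr ` ({1..n} \<times> {1..n})"

lemma finite_Jset: "finite (Jset n)" unfolding Jset_def by auto

lemma sumJ: "(\<Sum>v\<in>Jset n. F v) = (\<Sum>i=1..n. F (Inl i)) + (\<Sum>i=1..n. \<Sum>j=1..n. F (Inr (i, j)))"
proof -
  have "(\<Sum>v\<in>Jset n. F v) = (\<Sum>v\<in>Inl ` {1..n}. F v) + (\<Sum>v\<in>Inr ` ({1..n} \<times> {1..n}). F v)"
    unfolding Jset_def by (rule sum.union_disjoint) auto
  also have "\<dots> = (\<Sum>i=1..n. F (Inl i)) + (\<Sum>p\<in>{1..n} \<times> {1..n}. F (Inr p))"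
    by (simp add: sum.reindex)
  also have "(\<Sum>p\<in>{1..n} \<times> {1..n}. F (Inr p)) = (\<Sum>i=1..n. \<Sum>j=1..n. F (Inr (i, j)))"
    by (simp add: sum.cartesian_product)
  finally show ?thesis .
qed

lemma ifz_mult: "(if P then a else 0) * (b::real) = (if P then a * b else 0)" by simp
lemma mult_ifz: "(b::real) * (if P then a else 0) = (if P then b * a else 0)" by simp
lemma sum_ifc: "(\<Sum>j\<in>A. if P then f j else (0::real)) = (if P then (\<Sum>j\<in>A. f j) else 0)" by simp

lemma Lset_mem1:
  assumes "i \<in> {1..n}"
  shows "LEta i \<in> Lset n M" "LLo i \<in> Lset n M" "LUp i \<in> Lset n M" "LR1 i \<in> Lset n M"
    "LR2 i \<in> Lset n M" "LC1 i \<in> Lset n M" "LC2 i \<in> Lset n M"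
  using assms by (auto simp: Lset_def)

lemma Lset_mem2:
  assumes "i \<in> {1..n}" "j \<in> {1..n}"
  shows "LMu i j \<in> Lset n M" "LTh i j \<in> Lset n M"
  using assms rev_image_eqI[of "(i,j)" "{1..n}\<times>{1..n}" "LMu i j" "case_prod LMu"]
    rev_image_eqI[of "(i,j)" "{1..n}\<times>{1..n}" "LTh i j" "case_prod LTh"]
  by (auto simp: Lset_def)

lemma Lset_mem3:
  shows "m \<in> {1..M} \<Longrightarrow> LTm m \<in> Lset n M" "LB1 \<in> Lset n M" "LB2 \<in> Lset n M" "LOb \<in> Lset n M"
  by (auto simp: Lset_def)

lemma Lset_cases:
  assumes "l \<in> Lset n M"
  obtains i where "i \<in> {1..n}" "l = LEta i" | i where "i \<in> {1..n}" "l = LLo i"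
   | i where "i \<in> {1..n}" "l = LUp i" | i where "i \<in> {1..n}" "l = LR1 i"
   | i where "i \<in> {1..n}" "l = LR2 i" | i where "i \<in> {1..n}" "l = LC1 i"
   | i where "i \<in> {1..n}" "l = LC2 i" | i j where "i \<in> {1..n}" "j \<in> {1..n}" "l = LMu i j"
   | i j where "i \<in> {1..n}" "j \<in> {1..n}" "l = LTh i j" | m where "m \<in> {1..M}" "l = LTm m"
   | "l = LB1" | "l = LB2" | "l = LOb"
  using assms unfolding Lset_def
  apply (elim UnE imageE insertE emptyE SigmaE)
  apply (simp_all add: that)
  done

lemma Jset_mem: "i \<in> {1..n} \<Longrightarrow> Inl i \<in> Jset n" "i \<in> {1..n} \<Longrightarrow> j \<in> {1..n} \<Longrightarrow> Inr (i, j) \<in> Jset n"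
  by (auto simp: Jset_def)

context
  fixes N M :: nat and h gb cN vl vu \<sigma> :: "nat \<Rightarrow> real" and \<Delta> :: "nat \<Rightarrow> nat \<Rightarrow> real"
begin

fun Ar :: "lab \<Rightarrow> nat + nat \<times> nat \<Rightarrow> real" where
  "Ar (LEta i) (Inl i') = (if i' = i then -1 else 0)"
| "Ar (LLo i) (Inl i') = (if i' = i then -1 else 0)"
| "Ar (LLo i) (Inr (i',j)) = (if i' = i then -(\<sigma> j * vl i) else 0)"
| "Ar (LUp i) (Inl i') = (if i' = i then 1 else 0)"
| "Ar (LUp i) (Inr (i',j)) = (if i' = i then -(\<sigma> j * vu i) else 0)"
| "Ar (LR1 i) (Inr (i',j)) = (if i' = i then 1 else 0)"
| "Ar (LR2 i) (Inr (i',j)) = (if i' = i then -1 else 0)"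
| "Ar (LC1 j) (Inr (i,j')) = (if j' = j then 1 else 0)"
| "Ar (LC2 j) (Inr (i,j')) = (if j' = j then -1 else 0)"
| "Ar (LMu i j) (Inr (i',j')) = (if i' = i then if j' = j then -1 else 0 else 0)"
| "Ar (LTh i j) (Inr (i',j')) = (if i' = i then if j' = j then 1 else 0 else 0)"
| "Ar (LTm m) (Inl i) = h m * \<Delta> m i"
| "Ar LB1 (Inl i) = 1"
| "Ar LB2 (Inl i) = -1"
| "Ar LOb (Inl i) = gb i"
| "Ar _ _ = 0"

fun br :: "real \<Rightarrow> lab \<Rightarrow> real" where
  "br v (LEta i) = 0"
| "br v (LLo i) = - cN i"
| "br v (LUp i) = cN i"
| "br v (LR1 i) = 1"
| "br v (LR2 i) = -1"
| "br v (LC1 i) = 1"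
| "br v (LC2 i) = -1"
| "br v (LMu i j) = 0"
| "br v (LTh i j) = 1"
| "br v (LTm m) = 0"
| "br v LB1 = 1"
| "br v LB2 = -1"
| "br v LOb = v"

abbreviation "n \<equiv> N - 1"

lemma row_eval_i:
  assumes "i \<in> {1..n}"
  shows
  "(\<Sum>v\<in>Jset n. Ar (LEta i) v * x v) = - x (Inl i)"
  "(\<Sum>v\<in>Jset n. Ar (LLo i) v * x v) = - x (Inl i) - rowsig N (\<lambda>a b. x (Inr (a, b))) \<sigma> i * vl i"
  "(\<Sum>v\<in>Jset n. Ar (LUp i) v * x v) = x (Inl i) - rowsig N (\<lambda>a b. x (Inr (a, b))) \<sigma> i * vu i"
  "(\<Sum>v\<in>Jset n. Ar (LR1 i) v * x v) = (\<Sum>j=1..n. x (Inr (i, j)))"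
  "(\<Sum>v\<in>Jset n. Ar (LR2 i) v * x v) = - (\<Sum>j=1..n. x (Inr (i, j)))"
  "(\<Sum>v\<in>Jset n. Ar (LC1 i) v * x v) = (\<Sum>a=1..n. x (Inr (a, i)))"
  "(\<Sum>v\<in>Jset n. Ar (LC2 i) v * x v) = - (\<Sum>a=1..n. x (Inr (a, i)))"
  using assms
  apply (simp_all add: sumJ ifz_mult sum_ifc)
  apply (simp_all add: rowsig_def sum_distrib_left sum_negf algebra_simps)
  done

lemma row_eval_ij:
  assumes "i \<in> {1..n}" "j \<in> {1..n}"
  shows
  "(\<Sum>v\<in>Jset n. Ar (LMu i j) v * x v) = - x (Inr (i, j))"
  "(\<Sum>v\<in>Jset n. Ar (LTh i j) v * x v) = x (Inr (i, j))"
  using assms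
  apply (simp_all add: sumJ ifz_mult sum_ifc)
  done

lemma row_eval_0:
  shows
  "(\<Sum>v\<in>Jset n. Ar (LTm m) v * x v) = h m * dotv n (\<lambda>a. x (Inl a)) (\<Delta> m)"
  "(\<Sum>v\<in>Jset n. Ar LB1 v * x v) = (\<Sum>i=1..n. x (Inl i))"
  "(\<Sum>v\<in>Jset n. Ar LB2 v * x v) = - (\<Sum>i=1..n. x (Inl i))"
  "(\<Sum>v\<in>Jset n. Ar LOb v * x v) = dotv n (\<lambda>a. x (Inl a)) gb"
  apply (simp_all add: sumJ ifz_mult sum_ifc)
  apply (simp_all add: dotv_def sum_distrib_left sum_negf algebra_simps)
  done

lemma mult_eval:
  assumes "i \<in> {1..n}" "j \<in> {1..n}"
  shows
  "(\<Sum>l\<in>Lset n M. y l * Ar l (Inl i)) = - y (LEta i) - y (LLo i) + y (LUp i)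
     + (\<Sum>m=1..M. y (LTm m) * (h m * \<Delta> m i)) + y LB1 - y LB2 + y LOb * gb i"
  "(\<Sum>l\<in>Lset n M. y l * Ar l (Inr (i, j))) = - y (LLo i) * (\<sigma> j * vl i) - y (LUp i) * (\<sigma> j * vu i)
     + y (LR1 i) - y (LR2 i) + y (LC1 j) - y (LC2 j) - y (LMu i j) + y (LTh i j)"
  using assms
  apply (simp_all add: sumL mult_ifz sum_ifc)
  done

lemma rhs_eval:
  "(\<Sum>l\<in>Lset n M. y l * br v l) = - (\<Sum>i=1..n. y (LLo i) * cN i) + (\<Sum>i=1..n. y (LUp i) * cN i)
     + (\<Sum>i=1..n. y (LR1 i)) - (\<Sum>i=1..n. y (LR2 i)) + (\<Sum>i=1..n. y (LC1 i)) - (\<Sum>i=1..n. y (LC2 i))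
     + (\<Sum>i=1..n. \<Sum>j=1..n. y (LTh i j)) + y LB1 - y LB2 + y LOb * v"
  by (simp add: sumL sum_negf)

lemma stat_dot:
  assumes st: "\<forall>i\<in>{1..n}. gb i - ll i + lu i + \<beta> - \<eta> i + (\<Sum>m=1..M. \<theta> m * h m * \<Delta> m i) = 0"
  shows "(\<Sum>i=1..n. u i * gb i) = (\<Sum>i=1..n. u i * ll i) - (\<Sum>i=1..n. u i * lu i) - \<beta> * (\<Sum>i=1..n. u i)
     + (\<Sum>i=1..n. u i * \<eta> i) - (\<Sum>m=1..M. \<theta> m * h m * (\<Sum>i=1..n. u i * \<Delta> m i))"
proof -
  have "(\<Sum>i=1..n. u i * gb i) = (\<Sum>i=1..n. u i * ll i - u i * lu i - \<beta> * u i + u i * \<eta> i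
      - (\<Sum>m=1..M. \<theta> m * h m * (u i * \<Delta> m i)))"
  proof (rule sum.cong)
    fix i assume i: "i \<in> {1..n}"
    have e: "gb i - ll i + lu i + \<beta> - \<eta> i + (\<Sum>m=1..M. \<theta> m * h m * \<Delta> m i) = 0" using st i by blast
    have g: "gb i = ll i - lu i - \<beta> + \<eta> i - (\<Sum>m=1..M. \<theta> m * h m * \<Delta> m i)" using e by linarith
    have "u i * (\<Sum>m=1..M. \<theta> m * h m * \<Delta> m i) = (\<Sum>m=1..M. \<theta> m * h m * (u i * \<Delta> m i))"
      by (simp add: sum_distrib_left algebra_simps)
    then show "u i * gb i = u i * ll i - u i * lu i - \<beta> * u i + u i * \<eta> i
      - (\<Sum>m=1..M. \<theta> m * h m * (u i * \<Delta> m i))" unfolding g by (simp add: algebra_simps)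
  qed simp
  also have "\<dots> = (\<Sum>i=1..n. u i * ll i) - (\<Sum>i=1..n. u i * lu i) - \<beta> * (\<Sum>i=1..n. u i)
     + (\<Sum>i=1..n. u i * \<eta> i) - (\<Sum>i=1..n. \<Sum>m=1..M. \<theta> m * h m * (u i * \<Delta> m i))"
    by (simp add: sum.distrib sum_subtractf sum_distrib_left)
  also have "(\<Sum>i=1..n. \<Sum>m=1..M. \<theta> m * h m * (u i * \<Delta> m i)) = (\<Sum>m=1..M. \<theta> m * h m * (\<Sum>i=1..n. u i * \<Delta> m i))"
    by (subst sum.swap) (simp add: sum_distrib_left)
  finally show ?thesis .
qed

lemma assign_weak:
  assumes Pm: "Pm \<in> Smat N"
    and c1: "\<forall>i\<in>{1..n}. \<forall>j\<in>{1..n}. 0 \<le> (- ll i * vl i - lu i * vu i) * \<sigma> j + tlo i + tup j + Th i j"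
    and c2: "\<forall>i\<in>{1..n}. \<forall>j\<in>{1..n}. 0 \<le> Th i j"
  shows "- (\<Sum>i=1..n. \<Sum>j=1..n. Th i j) - (\<Sum>i=1..n. tlo i) - (\<Sum>i=1..n. tup i)
     \<le> (\<Sum>i=1..n. rowsig N Pm \<sigma> i * (- (ll i * vl i + lu i * vu i)))"
proof -
  have P1: "\<forall>i\<in>{1..n}. \<forall>j\<in>{1..n}. 0 \<le> Pm i j \<and> Pm i j \<le> 1" and
    P2: "\<forall>i\<in>{1..n}. (\<Sum>j=1..n. Pm i j) = 1" and P3: "\<forall>j\<in>{1..n}. (\<Sum>i=1..n. Pm i j) = 1"
    using Pm unfolding Smat_def by auto
  have "(\<Sum>i=1..n. rowsig N Pm \<sigma> i * (- (ll i * vl i + lu i * vu i)))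
     = (\<Sum>i=1..n. \<Sum>j=1..n. Pm i j * ((- ll i * vl i - lu i * vu i) * \<sigma> j))"
    unfolding rowsig_def by (simp add: sum_distrib_right sum_distrib_left sum_subtractf sum_negf algebra_simps)
  also have "\<dots> \<ge> (\<Sum>i=1..n. \<Sum>j=1..n. - (Pm i j * tlo i) - Pm i j * tup j - Th i j)"
  proof (intro sum_mono)
    fix i j assume i: "i \<in> {1..n}" and j: "j \<in> {1..n}"
    have "0 \<le> Pm i j * ((- ll i * vl i - lu i * vu i) * \<sigma> j + tlo i + tup j + Th i j)"
      using P1 c1 i j by auto
    moreover have "0 \<le> Th i j * (1 - Pm i j)" using P1 c2 i j by auto
    ultimately show "- (Pm i j * tlo i) - Pm i j * tup j - Th i j \<le> Pm i j * ((- ll i * vl i - lu i * vu i) * \<sigma> j)"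
      by (simp add: algebra_simps)
  qed
  also have "(\<Sum>i=1..n. \<Sum>j=1..n. - (Pm i j * tlo i) - Pm i j * tup j - Th i j)
     = - (\<Sum>i=1..n. tlo i * (\<Sum>j=1..n. Pm i j)) - (\<Sum>i=1..n. \<Sum>j=1..n. Pm i j * tup j) - (\<Sum>i=1..n. \<Sum>j=1..n. Th i j)"
    by (simp add: sum_subtractf sum_negf sum_distrib_left sum.distrib algebra_simps)
  also have "(\<Sum>i=1..n. \<Sum>j=1..n. Pm i j * tup j) = (\<Sum>j=1..n. tup j * (\<Sum>i=1..n. Pm i j))"
    by (subst sum.swap) (simp add: sum_distrib_left algebra_simps)
  also have "(\<Sum>i=1..n. tlo i * (\<Sum>j=1..n. Pm i j)) = (\<Sum>i=1..n. tlo i)" using P2 by simp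
  also have "(\<Sum>j=1..n. tup j * (\<Sum>i=1..n. Pm i j)) = (\<Sum>j=1..n. tup j)" using P3 by simp
  finally show ?thesis by simp
qed

lemma lagr_weak:
  assumes st: "\<forall>i\<in>{1..n}. gb i - ll i + lu i + \<beta> - \<eta> i + (\<Sum>m=1..M. \<theta> m * h m * \<Delta> m i) = 0"
    and nn: "\<forall>i\<in>{1..n}. 0 \<le> ll i \<and> 0 \<le> lu i \<and> 0 \<le> \<eta> i" and th: "\<forall>m\<in>{1..M}. 0 \<le> \<theta> m"
    and w: "w \<in> Vhat N M h \<Delta>"
    and box: "\<forall>i\<in>{1..n}. - (rowsig N Pm \<sigma> i) * vl i \<le> w i - cN i \<and> w i - cN i \<le> rowsig N Pm \<sigma> i * vu i"
    and cs: "(\<Sum>i=1..n. cN i) = 1"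
  shows "dotv n cN gb - dotv n \<eta> cN + (\<Sum>m=1..M. \<theta> m * h m * dotv n cN (\<Delta> m))
      + (\<Sum>i=1..n. rowsig N Pm \<sigma> i * (- (ll i * vl i + lu i * vu i))) \<le> dotv n w gb"
proof -
  have w1: "\<forall>i\<in>{1..n}. 0 \<le> w i" and w2: "(\<Sum>i=1..n. w i) = 1"
    and w3: "\<forall>m\<in>{1..M}. h m * dotv n w (\<Delta> m) \<le> 0" using w unfolding Vhat_def by auto
  have sw: "(\<Sum>i=1..n. w i * gb i) = (\<Sum>i=1..n. w i * ll i) - (\<Sum>i=1..n. w i * lu i) - \<beta> * (\<Sum>i=1..n. w i)
     + (\<Sum>i=1..n. w i * \<eta> i) - (\<Sum>m=1..M. \<theta> m * h m * (\<Sum>i=1..n. w i * \<Delta> m i))"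
    by (rule stat_dot[OF st])
  have sc: "(\<Sum>i=1..n. cN i * gb i) = (\<Sum>i=1..n. cN i * ll i) - (\<Sum>i=1..n. cN i * lu i) - \<beta> * (\<Sum>i=1..n. cN i)
     + (\<Sum>i=1..n. cN i * \<eta> i) - (\<Sum>m=1..M. \<theta> m * h m * (\<Sum>i=1..n. cN i * \<Delta> m i))"
    by (rule stat_dot[OF st])
  have A: "0 \<le> (\<Sum>i=1..n. w i * \<eta> i)" using w1 nn by (intro sum_nonneg) auto
  have B: "(\<Sum>m=1..M. \<theta> m * h m * (\<Sum>i=1..n. w i * \<Delta> m i)) \<le> 0"
  proof (intro sum_nonpos)
    fix m assume m: "m \<in> {1..M}"
    have "h m * (\<Sum>i=1..n. w i * \<Delta> m i) \<le> 0" using w3 m unfolding dotv_def by auto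
    then show "\<theta> m * h m * (\<Sum>i=1..n. w i * \<Delta> m i) \<le> 0" using th m
      by (metis mult.assoc mult_nonneg_nonpos)
  qed
  have C: "(\<Sum>i=1..n. rowsig N Pm \<sigma> i * (- (ll i * vl i + lu i * vu i)))
      \<le> (\<Sum>i=1..n. ll i * (w i - cN i) - lu i * (w i - cN i))"
  proof (intro sum_mono)
    fix i assume i: "i \<in> {1..n}"
    have "ll i * (- (rowsig N Pm \<sigma> i) * vl i) \<le> ll i * (w i - cN i)"
      using box nn i by (intro mult_left_mono) auto
    moreover have "lu i * (w i - cN i) \<le> lu i * (rowsig N Pm \<sigma> i * vu i)"
      using box nn i by (intro mult_left_mono) auto
    ultimately show "rowsig N Pm \<sigma> i * (- (ll i * vl i + lu i * vu i)) \<le> ll i * (w i - cN i) - lu i * (w i - cN i)"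
      by (simp add: algebra_simps)
  qed
  have D: "(\<Sum>i=1..n. ll i * (w i - cN i) - lu i * (w i - cN i)) =
     (\<Sum>i=1..n. w i * ll i) - (\<Sum>i=1..n. cN i * ll i) - (\<Sum>i=1..n. w i * lu i) + (\<Sum>i=1..n. cN i * lu i)"
    by (simp add: sum_subtractf sum.distrib algebra_simps)
  have E: "dotv n \<eta> cN = (\<Sum>i=1..n. cN i * \<eta> i)" "dotv n w gb = (\<Sum>i=1..n. w i * gb i)"
    "dotv n cN gb = (\<Sum>i=1..n. cN i * gb i)"
    "(\<Sum>m=1..M. \<theta> m * h m * dotv n cN (\<Delta> m)) = (\<Sum>m=1..M. \<theta> m * h m * (\<Sum>i=1..n. cN i * \<Delta> m i))"
    unfolding dotv_def by (simp_all add: mult.commute)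
  have F: "\<beta> * (\<Sum>i=1..n. w i) = \<beta>" "\<beta> * (\<Sum>i=1..n. cN i) = \<beta>" using w2 cs by simp_all
  show ?thesis unfolding E using sw sc A B C D F by linarith
qed

lemma DL:
  shows "valD N M h \<Delta> gb cN vl vu \<sigma> \<le> valL N M h \<Delta> gb cN vl vu \<sigma>"
  unfolding valD_def
proof (rule Sup_least)
  fix e assume "e \<in> {ereal (dotv (N-1) cN gb + (\<Sum>m=1..M. \<theta> m * h m * dotv (N-1) cN (\<Delta> m)) - dotv (N-1) \<eta> cN
               - (\<Sum>i=1..N-1. \<Sum>j=1..N-1. Th i j) - (\<Sum>i=1..N-1. tl i) - (\<Sum>i=1..N-1. tu i))
          | ll lu \<eta> tl tu (\<beta>::real) \<theta> Th.
          (\<forall>i\<in>{1..N-1}. gb i - ll i + lu i + \<beta> - \<eta> i + (\<Sum>m=1..M. \<theta> m * h m * \<Delta> m i) = 0) \<and>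
          (\<forall>i\<in>{1..N-1}. \<forall>j\<in>{1..N-1}.
             0 \<le> (- ll i * vl i - lu i * vu i) * \<sigma> j + tl i + tu j + Th i j) \<and>
          (\<forall>i\<in>{1..N-1}. 0 \<le> ll i \<and> 0 \<le> lu i \<and> 0 \<le> \<eta> i) \<and> (\<forall>m\<in>{1..M}. 0 \<le> \<theta> m) \<and>
          (\<forall>i\<in>{1..N-1}. \<forall>j\<in>{1..N-1}. 0 \<le> Th i j)}"
  then obtain ll lu \<eta> tlo tup \<beta> \<theta> Th where e: "e = ereal (dotv (N-1) cN gb + (\<Sum>m=1..M. \<theta> m * h m * dotv (N-1) cN (\<Delta> m)) - dotv (N-1) \<eta> cN
               - (\<Sum>i=1..N-1. \<Sum>j=1..N-1. Th i j) - (\<Sum>i=1..N-1. tlo i) - (\<Sum>i=1..N-1. tup i))"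
    and st: "\<forall>i\<in>{1..N-1}. gb i - ll i + lu i + \<beta> - \<eta> i + (\<Sum>m=1..M. \<theta> m * h m * \<Delta> m i) = 0"
    and c1: "\<forall>i\<in>{1..N-1}. \<forall>j\<in>{1..N-1}. 0 \<le> (- ll i * vl i - lu i * vu i) * \<sigma> j + tlo i + tup j + Th i j"
    and nn: "\<forall>i\<in>{1..N-1}. 0 \<le> ll i \<and> 0 \<le> lu i \<and> 0 \<le> \<eta> i" and th: "\<forall>m\<in>{1..M}. 0 \<le> \<theta> m"
    and c2: "\<forall>i\<in>{1..N-1}. \<forall>j\<in>{1..N-1}. 0 \<le> Th i j"
    by blast
  define X where "X = dotv (N-1) cN gb - dotv (N-1) \<eta> cN + (\<Sum>m=1..M. \<theta> m * h m * dotv (N-1) cN (\<Delta> m))"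
  define T where "T = - (\<Sum>i=1..N-1. \<Sum>j=1..N-1. Th i j) - (\<Sum>i=1..N-1. tlo i) - (\<Sum>i=1..N-1. tup i)"
  have "e = ereal X + ereal T" unfolding e X_def T_def by simp
  also have "ereal T \<le> (INF Pm\<in>Smat N. ereal (\<Sum>i=1..N-1. rowsig N Pm \<sigma> i * (- (ll i * vl i + lu i * vu i))))"
  proof (rule INF_greatest)
    fix Pm assume "Pm \<in> Smat N"
    from assign_weak[OF this c1 c2] show "ereal T \<le> ereal (\<Sum>i=1..N-1. rowsig N Pm \<sigma> i * (- (ll i * vl i + lu i * vu i)))"
      unfolding T_def by simp
  qed
  then have "ereal X + ereal T \<le> ereal X + (INF Pm\<in>Smat N. ereal (\<Sum>i=1..N-1. rowsig N Pm \<sigma> i * (- (ll i * vl i + lu i * vu i))))"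
    by (rule add_left_mono)
  also have "\<dots> \<le> valL N M h \<Delta> gb cN vl vu \<sigma>"
    unfolding valL_def X_def
    apply (rule Sup_upper)
    using st nn th by blast
  finally show "e \<le> valL N M h \<Delta> gb cN vl vu \<sigma>" .
qed

lemma LP:
  assumes cs: "(\<Sum>i=1..n. cN i) = 1"
  shows "valL N M h \<Delta> gb cN vl vu \<sigma> \<le> valP N M h \<Delta> gb cN vl vu \<sigma>"
  unfolding valL_def
proof (rule Sup_least)
  fix e assume "e \<in> {ereal (dotv (N-1) cN gb - dotv (N-1) \<eta> cN + (\<Sum>m=1..M. \<theta> m * h m * dotv (N-1) cN (\<Delta> m)))
            + (INF Pm\<in>Smat N. ereal (\<Sum>i=1..N-1. rowsig N Pm \<sigma> i * (- (ll i * vl i + lu i * vu i))))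
          | ll lu (\<beta>::real) \<eta> \<theta>.
          (\<forall>i\<in>{1..N-1}. gb i - ll i + lu i + \<beta> - \<eta> i + (\<Sum>m=1..M. \<theta> m * h m * \<Delta> m i) = 0) \<and>
          (\<forall>i\<in>{1..N-1}. 0 \<le> ll i \<and> 0 \<le> lu i \<and> 0 \<le> \<eta> i) \<and> (\<forall>m\<in>{1..M}. 0 \<le> \<theta> m)}"
  then obtain ll lu \<beta> \<eta> \<theta> where e: "e = ereal (dotv (N-1) cN gb - dotv (N-1) \<eta> cN + (\<Sum>m=1..M. \<theta> m * h m * dotv (N-1) cN (\<Delta> m)))
            + (INF Pm\<in>Smat N. ereal (\<Sum>i=1..N-1. rowsig N Pm \<sigma> i * (- (ll i * vl i + lu i * vu i))))"
    and st: "\<forall>i\<in>{1..N-1}. gb i - ll i + lu i + \<beta> - \<eta> i + (\<Sum>m=1..M. \<theta> m * h m * \<Delta> m i) = 0"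
    and nn: "\<forall>i\<in>{1..N-1}. 0 \<le> ll i \<and> 0 \<le> lu i \<and> 0 \<le> \<eta> i" and th: "\<forall>m\<in>{1..M}. 0 \<le> \<theta> m"
    by blast
  show "e \<le> valP N M h \<Delta> gb cN vl vu \<sigma>"
    unfolding valP_def
  proof (rule Inf_greatest)
    fix p assume "p \<in> {ereal (dotv (N-1) w gb) | w Pm. w \<in> Vhat N M h \<Delta> \<and> Pm \<in> Smat N \<and>
        (\<forall>i\<in>{1..N-1}. - (rowsig N Pm \<sigma> i) * vl i \<le> w i - cN i \<and> w i - cN i \<le> rowsig N Pm \<sigma> i * vu i)}"
    then obtain w Pm where p: "p = ereal (dotv (N-1) w gb)" and w: "w \<in> Vhat N M h \<Delta>" and Pm: "Pm \<in> Smat N"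
      and box: "\<forall>i\<in>{1..N-1}. - (rowsig N Pm \<sigma> i) * vl i \<le> w i - cN i \<and> w i - cN i \<le> rowsig N Pm \<sigma> i * vu i"
      by blast
    have "e \<le> ereal (dotv (N-1) cN gb - dotv (N-1) \<eta> cN + (\<Sum>m=1..M. \<theta> m * h m * dotv (N-1) cN (\<Delta> m)))
            + ereal (\<Sum>i=1..N-1. rowsig N Pm \<sigma> i * (- (ll i * vl i + lu i * vu i)))"
      unfolding e by (intro add_left_mono INF_lower Pm)
    also have "\<dots> \<le> p" unfolding p using lagr_weak[OF st nn th w box cs] by simp
    finally show "e \<le> p" .
  qed
qed

lemma PD:
  assumes cnn: "\<forall>i\<in>{1..n}. 0 \<le> cN i" and cs: "(\<Sum>i=1..n. cN i) = 1"
    and ch: "\<forall>m\<in>{1..M}. h m * dotv n cN (\<Delta> m) \<le> 0"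
    and vnn: "\<forall>i\<in>{1..n}. 0 \<le> vl i \<and> 0 \<le> vu i" and snn: "\<forall>j\<in>{1..n}. 0 \<le> \<sigma> j"
  shows "valP N M h \<Delta> gb cN vl vu \<sigma> \<le> valD N M h \<Delta> gb cN vl vu \<sigma>"
proof (rule ccontr)
  assume "\<not> ?thesis"
  then have lt: "valD N M h \<Delta> gb cN vl vu \<sigma> < valP N M h \<Delta> gb cN vl vu \<sigma>" by simp
  then obtain z where z: "valD N M h \<Delta> gb cN vl vu \<sigma> < z" "z < valP N M h \<Delta> gb cN vl vu \<sigma>"
    using dense by blast
  then have "\<bar>z\<bar> \<noteq> \<infinity>" by auto
  then obtain v where zv: "z = ereal v" by (cases z) auto
  have infeas: "\<not> (\<exists>x. \<forall>l\<in>Lset n M. (\<Sum>j\<in>Jset n. Ar l j * x j) \<le> br v l)"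
  proof
    assume "\<exists>x. \<forall>l\<in>Lset n M. (\<Sum>j\<in>Jset n. Ar l j * x j) \<le> br v l"
    then obtain x where x: "\<forall>l\<in>Lset n M. (\<Sum>j\<in>Jset n. Ar l j * x j) \<le> br v l" by blast
    define w where "w = (\<lambda>a. x (Inl a))"
    define Pm where "Pm = (\<lambda>a b. x (Inr (a, b)))"
    have xi: "- w i \<le> 0" "- w i - rowsig N Pm \<sigma> i * vl i \<le> - cN i" "w i - rowsig N Pm \<sigma> i * vu i \<le> cN i"
      "(\<Sum>j=1..n. Pm i j) \<le> 1" "- (\<Sum>j=1..n. Pm i j) \<le> -1"
      "(\<Sum>a=1..n. Pm a i) \<le> 1" "- (\<Sum>a=1..n. Pm a i) \<le> -1"
      if i: "i \<in> {1..n}" for i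
      using x[rule_format, OF Lset_mem1(1)[OF i]] x[rule_format, OF Lset_mem1(2)[OF i]]
        x[rule_format, OF Lset_mem1(3)[OF i]] x[rule_format, OF Lset_mem1(4)[OF i]]
        x[rule_format, OF Lset_mem1(5)[OF i]] x[rule_format, OF Lset_mem1(6)[OF i]]
        x[rule_format, OF Lset_mem1(7)[OF i]]
      unfolding row_eval_i[OF i] w_def Pm_def by simp_all
    have xij: "- Pm i j \<le> 0" "Pm i j \<le> 1" if i: "i \<in> {1..n}" and j: "j \<in> {1..n}" for i j
      using x[rule_format, OF Lset_mem2(1)[OF i j]] x[rule_format, OF Lset_mem2(2)[OF i j]]
      unfolding row_eval_ij[OF i j] Pm_def by simp_all
    have xm: "h m * dotv n w (\<Delta> m) \<le> 0" if m: "m \<in> {1..M}" for m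
      using x[rule_format, OF Lset_mem3(1)[OF m]] unfolding row_eval_0 w_def by simp
    have x0: "(\<Sum>i=1..n. w i) \<le> 1" "- (\<Sum>i=1..n. w i) \<le> -1" "dotv n w gb \<le> v"
      using x[rule_format, OF Lset_mem3(2)] x[rule_format, OF Lset_mem3(3)] x[rule_format, OF Lset_mem3(4)]
      unfolding row_eval_0 w_def by simp_all
    have wV1: "\<forall>i\<in>{1..N-1}. 0 \<le> w i" using xi(1) by fastforce
    have wV2: "(\<Sum>i=1..N-1. w i) = 1" using x0(1,2) by linarith
    have wV: "w \<in> Vhat N M h \<Delta>" unfolding Vhat_def mem_Collect_eq using wV1 wV2 xm by blast
    have PS1: "\<forall>i\<in>{1..N-1}. \<forall>j\<in>{1..N-1}. 0 \<le> Pm i j \<and> Pm i j \<le> 1"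
    proof (intro ballI)
      fix i j assume i: "i \<in> {1..N-1}" and j: "j \<in> {1..N-1}"
      show "0 \<le> Pm i j \<and> Pm i j \<le> 1" using xij(1)[OF i j] xij(2)[OF i j] by linarith
    qed
    have PS2: "\<forall>i\<in>{1..N-1}. (\<Sum>j=1..N-1. Pm i j) = 1"
    proof
      fix i assume i: "i \<in> {1..N-1}"
      show "(\<Sum>j=1..N-1. Pm i j) = 1" using xi(4)[OF i] xi(5)[OF i] by linarith
    qed
    have PS3: "\<forall>j\<in>{1..N-1}. (\<Sum>i=1..N-1. Pm i j) = 1"
    proof
      fix i assume i: "i \<in> {1..N-1}"
      show "(\<Sum>a=1..N-1. Pm a i) = 1" using xi(6)[OF i] xi(7)[OF i] by linarith
    qed
    have PS: "Pm \<in> Smat N" unfolding Smat_def mem_Collect_eq using PS1 PS2 PS3 by blast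
    have box: "\<forall>i\<in>{1..N-1}. - (rowsig N Pm \<sigma> i) * vl i \<le> w i - cN i \<and> w i - cN i \<le> rowsig N Pm \<sigma> i * vu i"
    proof
      fix i assume i: "i \<in> {1..N-1}"
      show "- (rowsig N Pm \<sigma> i) * vl i \<le> w i - cN i \<and> w i - cN i \<le> rowsig N Pm \<sigma> i * vu i"
        using xi(2)[OF i] xi(3)[OF i] by (simp only: mult_minus_left) linarith
    qed
    have "ereal (dotv (N-1) w gb) \<in> {ereal (dotv (N-1) w gb) | w Pm. w \<in> Vhat N M h \<Delta> \<and> Pm \<in> Smat N \<and>
        (\<forall>i\<in>{1..N-1}. - (rowsig N Pm \<sigma> i) * vl i \<le> w i - cN i \<and> w i - cN i \<le> rowsig N Pm \<sigma> i * vu i)}"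
      using wV PS box by blast
    then have "valP N M h \<Delta> gb cN vl vu \<sigma> \<le> ereal (dotv (N-1) w gb)" unfolding valP_def by (rule Inf_lower)
    also have "\<dots> \<le> z" using x0(3) zv by simp
    finally show False using z(2) by simp
  qed
  obtain y where y: "\<forall>l\<in>Lset n M. 0 \<le> y l" "\<forall>j\<in>Jset n. (\<Sum>l\<in>Lset n M. y l * Ar l j) = 0"
    "(\<Sum>l\<in>Lset n M. y l * br v l) < 0"
    using farkas[OF finite_Lset finite_Jset infeas] by blast
  define t where "t = y LOb"
  have t0: "0 \<le> t" unfolding t_def using y(1) Lset_mem3(4) by blast
  show False
  proof (cases "t = 0")
    case True
    define x0 :: "nat + nat \<times> nat \<Rightarrow> real" where "x0 = (\<lambda>v'. case v' of Inl i \<Rightarrow> cN i | Inr (i, j) \<Rightarrow> (if i = j then 1 else (0::real)))"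
    have rs: "rowsig N (\<lambda>a b. x0 (Inr (a, b))) \<sigma> i = \<sigma> i" if "i \<in> {1..n}" for i
      using that unfolding rowsig_def x0_def by (simp add: ifz_mult)
    have "0 \<le> (\<Sum>l\<in>Lset n M. y l * br v l)"
    proof (rule weak[OF finite_Lset finite_Jset y(1) y(2)], rule ballI, rule impI)
      fix l assume l: "l \<in> Lset n M" and yl: "y l \<noteq> 0"
      from l show "(\<Sum>j\<in>Jset n. Ar l j * x0 j) \<le> br v l"
      proof (cases rule: Lset_cases)
        case (1 i) then show ?thesis unfolding 1(2) row_eval_i(1)[OF 1(1)] using cnn by (simp add: x0_def)
      next
        case (2 i) then show ?thesis unfolding 2(2) row_eval_i(2)[OF 2(1)] rs[OF 2(1)] using vnn snn 2(1) by (simp add: x0_def)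
      next
        case (3 i) then show ?thesis unfolding 3(2) row_eval_i(3)[OF 3(1)] rs[OF 3(1)] using vnn snn 3(1) by (simp add: x0_def)
      next
        case (4 i) then show ?thesis unfolding 4(2) row_eval_i(4)[OF 4(1)] by (simp add: x0_def)
      next
        case (5 i) then show ?thesis unfolding 5(2) row_eval_i(5)[OF 5(1)] by (simp add: x0_def)
      next
        case (6 i) then show ?thesis unfolding 6(2) row_eval_i(6)[OF 6(1)] by (simp add: x0_def)
      next
        case (7 i) then show ?thesis unfolding 7(2) row_eval_i(7)[OF 7(1)] by (simp add: x0_def)
      next
        case (8 i j) then show ?thesis unfolding 8(3) row_eval_ij(1)[OF 8(1,2)] by (simp add: x0_def)
      next
        case (9 i j) then show ?thesis unfolding 9(3) row_eval_ij(2)[OF 9(1,2)] by (simp add: x0_def)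
      next
        case (10 m) then show ?thesis unfolding 10(2) row_eval_0(1) using ch 10(1) by (simp add: x0_def)
      next
        case 11 then show ?thesis unfolding 11 row_eval_0(2) using cs by (simp add: x0_def)
      next
        case 12 then show ?thesis unfolding 12 row_eval_0(3) using cs by (simp add: x0_def)
      next
        case 13 then show ?thesis using yl True t_def by simp
      qed
    qed
    then show False using y(3) by simp
  next
    case False
    then have tp: "0 < t" using t0 by simp
    have ynn: "0 \<le> y l" if "l \<in> Lset n M" for l using y(1) that by blast
    have eqW: "- y (LEta i) - y (LLo i) + y (LUp i) + (\<Sum>m=1..M. y (LTm m) * (h m * \<Delta> m i)) + y LB1 - y LB2 + t * gb i = 0"
      if i: "i \<in> {1..n}" for i
      using y(2)[rule_format, OF Jset_mem(1)[OF i]] unfolding mult_eval(1)[OF i i] t_def .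
    have eqP: "- y (LLo i) * (\<sigma> j * vl i) - y (LUp i) * (\<sigma> j * vu i)
     + y (LR1 i) - y (LR2 i) + y (LC1 j) - y (LC2 j) - y (LMu i j) + y (LTh i j) = 0"
      if i: "i \<in> {1..n}" and j: "j \<in> {1..n}" for i j
      using y(2)[rule_format, OF Jset_mem(2)[OF i j]] unfolding mult_eval(2)[OF i j] .
    have rhs: "- (\<Sum>i=1..n. y (LLo i) * cN i) + (\<Sum>i=1..n. y (LUp i) * cN i)
     + (\<Sum>i=1..n. y (LR1 i)) - (\<Sum>i=1..n. y (LR2 i)) + (\<Sum>i=1..n. y (LC1 i)) - (\<Sum>i=1..n. y (LC2 i))
     + (\<Sum>i=1..n. \<Sum>j=1..n. y (LTh i j)) + y LB1 - y LB2 + t * v < 0"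
      using y(3) unfolding rhs_eval t_def .
    define s where "s = 1 / t"
    have sp: "0 < s" using tp unfolding s_def by simp
    have ts: "s * t = 1" using tp unfolding s_def by simp
    define ll where "ll = (\<lambda>i. s * y (LLo i))"
    define lu where "lu = (\<lambda>i. s * y (LUp i))"
    define \<eta> where "\<eta> = (\<lambda>i. s * y (LEta i))"
    define tlo where "tlo = (\<lambda>i. s * (y (LR1 i) - y (LR2 i)))"
    define tup where "tup = (\<lambda>i. s * (y (LC1 i) - y (LC2 i)))"
    define \<beta> where "\<beta> = s * (y LB1 - y LB2)"
    define \<theta> where "\<theta> = (\<lambda>m. s * y (LTm m))"
    define Th where "Th = (\<lambda>i j. s * y (LTh i j))"
    have st: "\<forall>i\<in>{1..N-1}. gb i - ll i + lu i + \<beta> - \<eta> i + (\<Sum>m=1..M. \<theta> m * h m * \<Delta> m i) = 0"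
    proof
      fix i assume i: "i \<in> {1..N-1}"
      have a1: "s * (\<Sum>m=1..M. y (LTm m) * (h m * \<Delta> m i)) = (\<Sum>m=1..M. \<theta> m * h m * \<Delta> m i)"
        unfolding \<theta>_def by (simp add: sum_distrib_left mult.assoc)
      have a2: "s * (t * gb i) = gb i" using ts by (simp add: mult.assoc[symmetric])
      have a3: "\<beta> = s * y LB1 - s * y LB2" unfolding \<beta>_def by (simp add: right_diff_distrib)
      have "s * (- y (LEta i) - y (LLo i) + y (LUp i) + (\<Sum>m=1..M. y (LTm m) * (h m * \<Delta> m i)) + y LB1 - y LB2 + t * gb i)
        = - (s * y (LEta i)) - s * y (LLo i) + s * y (LUp i) + s * (\<Sum>m=1..M. y (LTm m) * (h m * \<Delta> m i))
          + s * y LB1 - s * y LB2 + s * (t * gb i)"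
        by (simp only: distrib_left right_diff_distrib mult_minus_right)
      moreover have "s * (- y (LEta i) - y (LLo i) + y (LUp i) + (\<Sum>m=1..M. y (LTm m) * (h m * \<Delta> m i)) + y LB1 - y LB2 + t * gb i) = 0"
        using eqW[OF i] by simp
      ultimately show "gb i - ll i + lu i + \<beta> - \<eta> i + (\<Sum>m=1..M. \<theta> m * h m * \<Delta> m i) = 0"
        unfolding ll_def lu_def \<eta>_def a3 using a1 a2 by linarith
    qed
    have c1: "\<forall>i\<in>{1..N-1}. \<forall>j\<in>{1..N-1}. 0 \<le> (- ll i * vl i - lu i * vu i) * \<sigma> j + tlo i + tup j + Th i j"
    proof (intro ballI)
      fix i j assume i: "i \<in> {1..N-1}" and j: "j \<in> {1..N-1}"
      have "(- ll i * vl i - lu i * vu i) * \<sigma> j + tlo i + tup j + Th i j = s * y (LMu i j)"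
      proof -
        have "(- ll i * vl i - lu i * vu i) * \<sigma> j + tlo i + tup j + Th i j
          = s * (- y (LLo i) * (\<sigma> j * vl i) - y (LUp i) * (\<sigma> j * vu i)
             + y (LR1 i) - y (LR2 i) + y (LC1 j) - y (LC2 j) + y (LTh i j))"
          unfolding ll_def lu_def tlo_def tup_def Th_def by (simp add: algebra_simps)
        also have "\<dots> = s * y (LMu i j)" using eqP[OF i j] by (simp add: algebra_simps)
        finally show ?thesis .
      qed
      also have "0 \<le> s * y (LMu i j)" using sp ynn[OF Lset_mem2(1)[OF i j]] by simp
      ultimately show "0 \<le> (- ll i * vl i - lu i * vu i) * \<sigma> j + tlo i + tup j + Th i j" by simp
    qed
    have nn: "\<forall>i\<in>{1..N-1}. 0 \<le> ll i \<and> 0 \<le> lu i \<and> 0 \<le> \<eta> i"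
      unfolding ll_def lu_def \<eta>_def using sp ynn Lset_mem1 by (simp add: less_imp_le)
    have th: "\<forall>m\<in>{1..M}. 0 \<le> \<theta> m"
      unfolding \<theta>_def using sp ynn Lset_mem3(1) by (simp add: less_imp_le)
    have c2: "\<forall>i\<in>{1..N-1}. \<forall>j\<in>{1..N-1}. 0 \<le> Th i j"
      unfolding Th_def using sp ynn Lset_mem2(2) by (simp add: less_imp_le)
    define Dobj where "Dobj = dotv (N-1) cN gb + (\<Sum>m=1..M. \<theta> m * h m * dotv (N-1) cN (\<Delta> m)) - dotv (N-1) \<eta> cN
               - (\<Sum>i=1..N-1. \<Sum>j=1..N-1. Th i j) - (\<Sum>i=1..N-1. tlo i) - (\<Sum>i=1..N-1. tup i)"
    have sc: "(\<Sum>i=1..n. cN i * gb i) = (\<Sum>i=1..n. cN i * ll i) - (\<Sum>i=1..n. cN i * lu i) - \<beta> * (\<Sum>i=1..n. cN i)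
     + (\<Sum>i=1..n. cN i * \<eta> i) - (\<Sum>m=1..M. \<theta> m * h m * (\<Sum>i=1..n. cN i * \<Delta> m i))"
      by (rule stat_dot[OF st])
    have E: "dotv n \<eta> cN = (\<Sum>i=1..n. cN i * \<eta> i)"
      "dotv n cN gb = (\<Sum>i=1..n. cN i * gb i)"
      "(\<Sum>m=1..M. \<theta> m * h m * dotv n cN (\<Delta> m)) = (\<Sum>m=1..M. \<theta> m * h m * (\<Sum>i=1..n. cN i * \<Delta> m i))"
      unfolding dotv_def by (simp_all add: mult.commute)
    have D1: "Dobj = (\<Sum>i=1..n. cN i * ll i) - (\<Sum>i=1..n. cN i * lu i) - \<beta>
       - (\<Sum>i=1..N-1. \<Sum>j=1..N-1. Th i j) - (\<Sum>i=1..N-1. tlo i) - (\<Sum>i=1..N-1. tup i)"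
      unfolding Dobj_def E using sc cs by simp
    define K where "K = (\<Sum>i=1..n. y (LLo i) * cN i) - (\<Sum>i=1..n. y (LUp i) * cN i) - (y LB1 - y LB2)
       - (\<Sum>i=1..n. \<Sum>j=1..n. y (LTh i j)) - ((\<Sum>i=1..n. y (LR1 i)) - (\<Sum>i=1..n. y (LR2 i)))
       - ((\<Sum>i=1..n. y (LC1 i)) - (\<Sum>i=1..n. y (LC2 i)))"
    have D2: "Dobj = s * K"
      unfolding D1 K_def ll_def lu_def \<beta>_def Th_def tlo_def tup_def
      by (simp add: sum_distrib_left sum_subtractf algebra_simps)
    have "t * v < K" using rhs unfolding K_def by linarith
    then have "s * (t * v) < s * K" using sp by simp
    then have vD: "v < Dobj" unfolding D2 using ts by (simp add: mult.assoc[symmetric])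
    have "ereal Dobj \<in> {ereal (dotv (N-1) cN gb + (\<Sum>m=1..M. \<theta> m * h m * dotv (N-1) cN (\<Delta> m)) - dotv (N-1) \<eta> cN
               - (\<Sum>i=1..N-1. \<Sum>j=1..N-1. Th i j) - (\<Sum>i=1..N-1. tl i) - (\<Sum>i=1..N-1. tu i))
          | ll lu \<eta> tl tu (\<beta>::real) \<theta> Th.
          (\<forall>i\<in>{1..N-1}. gb i - ll i + lu i + \<beta> - \<eta> i + (\<Sum>m=1..M. \<theta> m * h m * \<Delta> m i) = 0) \<and>
          (\<forall>i\<in>{1..N-1}. \<forall>j\<in>{1..N-1}.
             0 \<le> (- ll i * vl i - lu i * vu i) * \<sigma> j + tl i + tu j + Th i j) \<and>
          (\<forall>i\<in>{1..N-1}. 0 \<le> ll i \<and> 0 \<le> lu i \<and> 0 \<le> \<eta> i) \<and> (\<forall>m\<in>{1..M}. 0 \<le> \<theta> m) \<and>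
          (\<forall>i\<in>{1..N-1}. \<forall>j\<in>{1..N-1}. 0 \<le> Th i j)}"
      unfolding Dobj_def using st c1 nn th c2 by blast
    then have "ereal Dobj \<le> valD N M h \<Delta> gb cN vl vu \<sigma>" unfolding valD_def by (rule Sup_upper)
    moreover have "ereal v < ereal Dobj" using vD by simp
    ultimately have "ereal v < valD N M h \<Delta> gb cN vl vu \<sigma>" by (rule order.strict_trans2[rotated])
    then show False using z(1) zv by simp

  qed
qed


lemma general:
  assumes cnn: "\<forall>i\<in>{1..n}. 0 \<le> cN i" and cs: "(\<Sum>i=1..n. cN i) = 1"
    and ch: "\<forall>m\<in>{1..M}. h m * dotv n cN (\<Delta> m) \<le> 0"
    and vnn: "\<forall>i\<in>{1..n}. 0 \<le> vl i \<and> 0 \<le> vu i" and snn: "\<forall>j\<in>{1..n}. 0 \<le> \<sigma> j"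
  shows "valP N M h \<Delta> gb cN vl vu \<sigma> = valD N M h \<Delta> gb cN vl vu \<sigma>
     \<and> valL N M h \<Delta> gb cN vl vu \<sigma> = valD N M h \<Delta> gb cN vl vu \<sigma>"
  using DL LP[OF cs] PD[OF cnn cs ch vnn snn] by (meson order.trans antisym)

end

lemma Rmap_sum:
  assumes "3 \<le> N"
  shows "(\<Sum>i=1..N-1. Rmap N v i) = 1"
proof -
  have e: "N - 1 = Suc (N - 2)" using assms by simp
  have "(\<Sum>i=1..N-1. Rmap N v i) = (\<Sum>i=1..N-2. Rmap N v i) + Rmap N v (N - 1)"
    unfolding e by (simp add: sum.cl_ivl_Suc)
  also have "(\<Sum>i=1..N-2. Rmap N v i) = (\<Sum>i=1..N-2. v i)"
    by (rule sum.cong) (auto simp: Rmap_def)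
  finally show ?thesis by (simp add: Rmap_def)
qed

lemma Rmap_bounds:
  assumes "3 \<le> N" "v \<in> Vset N M h \<Delta>" "i \<in> {1..N-1}"
  shows "0 \<le> Rmap N v i \<and> Rmap N v i \<le> 1"
proof -
  have nn: "\<forall>i\<in>{1..N-2}. 0 \<le> v i" and s1: "(\<Sum>i=1..N-2. v i) \<le> 1" using assms(2) unfolding Vset_def by auto
  have s0: "0 \<le> (\<Sum>i=1..N-2. v i)" using nn by (intro sum_nonneg) auto
  show ?thesis
  proof (cases "i = N - 1")
    case True
    then show ?thesis using s0 s1 by (simp add: Rmap_def)
  next
    case False
    then have i: "i \<in> {1..N-2}" using assms(3) by auto
    have "v i \<le> (\<Sum>i=1..N-2. v i)" using nn i by (intro member_le_sum) auto
    then show ?thesis using False nn i s1 by (simp add: Rmap_def)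
  qed
qed

lemma pos_slacks_Vset: "pos_slacks N M h \<Delta> c \<Longrightarrow> c \<in> Vset N M h \<Delta>"
  unfolding pos_slacks_def Vset_def by (auto simp: less_imp_le)

lemma vlow_vup_nonneg:
  assumes "3 \<le> N" "c \<in> Vset N M h \<Delta>" "i \<in> {1..N-1}"
  shows "0 \<le> vlow N M h \<Delta> c i \<and> 0 \<le> vup N M h \<Delta> c i"
proof -
  define S where "S = {Rmap N v i - Rmap N c i | v. v \<in> Vset N M h \<Delta>}"
  have c01: "0 \<le> Rmap N c i \<and> Rmap N c i \<le> 1" using Rmap_bounds[OF assms] .
  have z: "0 \<in> S" unfolding S_def using assms(2) by force
  have bb: "\<forall>s\<in>S. -1 \<le> s \<and> s \<le> 1" unfolding S_def using Rmap_bounds[OF assms(1) _ assms(3)] c01 by force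
  have "bdd_below S" using bb by (intro bdd_belowI[of _ "-1"]) auto
  then have "Inf S \<le> 0" by (rule cInf_lower[OF z])
  moreover have "bdd_above S" using bb by (intro bdd_aboveI[of _ 1]) auto
  then have "0 \<le> Sup S" by (rule cSup_upper[OF z])
  ultimately show ?thesis unfolding vlow_def vup_def S_def[symmetric] by simp
qed

lemma sigmav_nonneg: "0 < \<gamma> \<Longrightarrow> 0 \<le> sigmav \<gamma> N j"
  unfolding sigmav_def varsigma_def by (intro divide_nonneg_nonneg mult_nonneg_nonneg) auto

theorem theorem3:
  fixes N K M :: nat and x :: "nat \<Rightarrow> real" and z :: "real^'n" and xi :: "nat \<Rightarrow> real^'n"
    and r1 r2 r3 p h c :: "nat \<Rightarrow> real" and \<gamma> :: real
  assumes "N \<ge> 3"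
    and "\<forall>i\<in>{1..<N}. x i < x (Suc i)"
    and "K \<ge> 1"
    and "\<forall>k\<in>{1..K}. x 1 \<le> z \<bullet> xi k \<and> z \<bullet> xi k \<le> x N"
    and "M \<ge> 1"
    and "\<forall>m\<in>{1..M}. r1 m \<le> r3 m \<and> x 1 \<le> r1 m \<and> r1 m \<le> x N \<and> x 1 \<le> r2 m \<and> r2 m \<le> x N
           \<and> x 1 \<le> r3 m \<and> r3 m \<le> x N \<and> 0 \<le> p m \<and> p m \<le> 1 \<and> (h m = -1 \<or> h m = 1)"
    and "\<exists>v. in_int_V N M h (DeltaF N x p r1 r2 r3) v"
    and "analytic_center N M h (DeltaF N x p r1 r2 r3) c"
    and "0 < \<gamma>" and "\<gamma> \<le> 1"
  shows "valP N M h (DeltaF N x p r1 r2 r3) (gbar N x K z xi) (Rmap N c)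
            (vlow N M h (DeltaF N x p r1 r2 r3) c) (vup N M h (DeltaF N x p r1 r2 r3) c) (sigmav \<gamma> N)
       = valD N M h (DeltaF N x p r1 r2 r3) (gbar N x K z xi) (Rmap N c)
            (vlow N M h (DeltaF N x p r1 r2 r3) c) (vup N M h (DeltaF N x p r1 r2 r3) c) (sigmav \<gamma> N)
     \<and> valL N M h (DeltaF N x p r1 r2 r3) (gbar N x K z xi) (Rmap N c)
            (vlow N M h (DeltaF N x p r1 r2 r3) c) (vup N M h (DeltaF N x p r1 r2 r3) c) (sigmav \<gamma> N)
       = valD N M h (DeltaF N x p r1 r2 r3) (gbar N x K z xi) (Rmap N c)
            (vlow N M h (DeltaF N x p r1 r2 r3) c) (vup N M h (DeltaF N x p r1 r2 r3) c) (sigmav \<gamma> N)"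
proof -
  let ?D = "DeltaF N x p r1 r2 r3"
  have ps: "pos_slacks N M h ?D c" using assms(8) unfolding analytic_center_def by blast
  have cV: "c \<in> Vset N M h ?D" using pos_slacks_Vset[OF ps] .
  have cnn: "\<forall>i\<in>{1..N-1}. 0 \<le> Rmap N c i" using Rmap_bounds[OF assms(1) cV] by blast
  have cs: "(\<Sum>i=1..N-1. Rmap N c i) = 1" using Rmap_sum[OF assms(1)] .
  have ch: "\<forall>m\<in>{1..M}. h m * dotv (N-1) (Rmap N c) (?D m) \<le> 0"
    using ps unfolding pos_slacks_def by (auto simp: less_imp_le)
  have vnn: "\<forall>i\<in>{1..N-1}. 0 \<le> vlow N M h ?D c i \<and> 0 \<le> vup N M h ?D c i"
    using vlow_vup_nonneg[OF assms(1) cV] by blast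
  have snn: "\<forall>j\<in>{1..N-1}. 0 \<le> sigmav \<gamma> N j" using sigmav_nonneg[OF assms(9)] by blast
  show ?thesis by (rule general[OF cnn cs ch vnn snn])
qed

end
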